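(* Let $f:\mathbb{Z}^n\to\mathbb{R}\cup\{+\infty\}$ be an M-convex function with bounded $\operatorname{dom} f$, and let $x\in\operatorname{dom} f$ with $\phi(x)<0$. Consider the procedure M-IncSlope$(x)$: set $y:=x$; then for each $i\in N$ (each taken exactly once, in an arbitrary order) and, for this $i$, for each $j\in N\setminus\{i\}$ (each taken exactly once, in an arbitrary order), if $f'(y;i,j)=\phi(x)$ then replace $y$ by $y+\bar c(y;i,j)(\chi_i-\chi_j)$; finally output $x':=y$. Then, for every choice of the orders, the output satisfies $\phi(x')>\phi(x)$.
   Context: $N=\{1,\dots,n\}$; $\chi_i\in\{0,1\}^n$ is the $i$-th unit vector. For $f:\mathbb{Z}^n\to\mathbb{R}\cup\{+\infty\}$, $\operatorname{dom} f=\{x\in\mathbb{Z}^n: f(x)<+\infty\}$. $f$ is M-convex if $\operatorname{dom} f\neq\emptyset$ and for all $x,y\in\operatorname{dom} f$ and every $i$ with $x(i)>y(i)$ there is $j$ with $x(j)<y(j)$ such that $f(x)+f(y)\ge f(x-\chi_i+\chi_j)+f(y+\chi_i-\chi_j)$. For $x\in\operatorname{dom} f$ and $i,j\in N$, $f'(x;i,j)=f(x+\chi_i-\chi_j)-f(x)$ (possibly $+\infty$; $f'(x;i,i)=0$), and $\phi(x)=\min_{i,j\in N}f'(x;i,j)$. For $y\in\operatorname{dom} f$ and $i,j$ with $f'(y;i,j)$ finite, the step length is $\bar c(y;i,j)=\max\{\lambda\in\mathbb{Z}_{\ge 0}: f(y+\lambda(\chi_i-\chi_j))-f(y)=\lambda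 f'(y;i,j)\}$ (finite since $\operatorname{dom} f$ is bounded). *)

theory Defs
  imports "HOL-Library.Extended_Real" "HOL-Library.Function_Algebras"
begin

text \<open>Ground set N is the finite index type 'n (N = UNIV); points of Z^N are functions 'n => int.
Functions f : Z^N -> R \<union> {+\<infinity>} are modelled as f :: ('n => int) => ereal with f never -\<infinity>.\<close>

definition chi :: "'n \<Rightarrow> ('n \<Rightarrow> int)" where
  "chi i = (\<lambda>k. if k = i then 1 else 0)"

definition dom_f :: "(('n \<Rightarrow> int) \<Rightarrow> ereal) \<Rightarrow> ('n \<Rightarrow> int) set" where
  "dom_f f = {x. f x < \<infinity>}"

definition M_convex :: "(('n \<Rightarrow> int) \<Rightarrow> ereal) \<Rightarrow> bool" where
  "M_convex f \<longleftrightarrow> dom_f f \<noteq> {} \<and>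
     (\<forall>x\<in>dom_f f. \<forall>y\<in>dom_f f. \<forall>i. x i > y i \<longrightarrow>
        (\<exists>j. x j < y j \<and> f x + f y \<ge> f (x - chi i + chi j) + f (y + chi i - chi j)))"

definition bounded_dom :: "(('n \<Rightarrow> int) \<Rightarrow> ereal) \<Rightarrow> bool" where
  "bounded_dom f \<longleftrightarrow> (\<exists>B. \<forall>x\<in>dom_f f. \<forall>k. \<bar>x k\<bar> \<le> B)"

definition fder :: "(('n \<Rightarrow> int) \<Rightarrow> ereal) \<Rightarrow> ('n \<Rightarrow> int) \<Rightarrow> 'n \<Rightarrow> 'n \<Rightarrow> ereal" where
  "fder f x i j = f (x + chi i - chi j) - f x"

definition phi :: "(('n::finite \<Rightarrow> int) \<Rightarrow> ereal) \<Rightarrow> ('n \<Rightarrow> int) \<Rightarrow> ereal" where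
  "phi f x = Min {fder f x i j | i j. True}"

definition smul :: "int \<Rightarrow> ('n \<Rightarrow> int) \<Rightarrow> ('n \<Rightarrow> int)" where
  "smul c v = (\<lambda>k. c * v k)"

definition cbar :: "(('n \<Rightarrow> int) \<Rightarrow> ereal) \<Rightarrow> ('n \<Rightarrow> int) \<Rightarrow> 'n \<Rightarrow> 'n \<Rightarrow> nat" where
  "cbar f y i j = Max {l::nat. f (y + smul (int l) (chi i - chi j)) - f y
                                = ereal (real l) * fder f y i j}"

definition incslope_step :: "(('n::finite \<Rightarrow> int) \<Rightarrow> ereal) \<Rightarrow> ('n \<Rightarrow> int) \<Rightarrow> ('n \<Rightarrow> int) \<Rightarrow> 'n \<times> 'n \<Rightarrow> ('n \<Rightarrow> int)" where
  "incslope_step f x y p = (case p of (i, j) \<Rightarrow>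
     if fder f y i j = phi f x then y + smul (int (cbar f y i j)) (chi i - chi j) else y)"

text \<open>M-IncSlope(x) with outer order ord_i (a list enumerating N once each) and,
for each i, inner order ord_j i (a list enumerating N - {i} once each).\<close>
definition M_IncSlope :: "(('n::finite \<Rightarrow> int) \<Rightarrow> ereal) \<Rightarrow> ('n \<Rightarrow> int) \<Rightarrow> 'n list \<Rightarrow> ('n \<Rightarrow> 'n list) \<Rightarrow> ('n \<Rightarrow> int)" where
  "M_IncSlope f x ord_i ord_j =
     foldl (incslope_step f x) x (concat (map (\<lambda>i. map (\<lambda>j. (i, j)) (ord_j i)) ord_i))"

end

theory Submission
  imports Defs
begin

definition pos :: "('n::finite \<Rightarrow> int) \<Rightarrow> ('n \<Rightarrow> int) \<Rightarrow> nat" where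
  "pos z y = (\<Sum>t\<in>UNIV. nat (z t - y t))"

lemma pos_exchange:
  fixes z y :: "'n::finite \<Rightarrow> int"
  assumes "z i > y i" "z j < y j"
  shows "pos z y = Suc (pos (z - chi i + chi j) y)"
proof -
  have ij: "i \<noteq> j" using assms by auto
  have "\<forall>t. nat (z t - y t) = nat ((z - chi i + chi j) t - y t) + (if t = i then 1 else 0)"
    using assms ij by (auto simp: chi_def)
  then have "pos z y = (\<Sum>t\<in>UNIV. nat ((z - chi i + chi j) t - y t) + (if t = i then 1 else 0))"
    unfolding pos_def by simp
  also have "\<dots> = pos (z - chi i + chi j) y + 1"
    by (simp add: pos_def sum.distrib)
  finally show ?thesis by simp
qed

lemma pos_bound: "(\<And>t. nat (z t - y t) \<le> g t) \<Longrightarrow> pos z y \<le> sum g UNIV"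
  unfolding pos_def by (rule sum_mono) auto

lemma pos_zero: "pos z y = 0 \<Longrightarrow> z t \<le> y t"
  unfolding pos_def by simp

lemma pos_pos: assumes "pos z y = Suc m" obtains i where "z i > y i"
proof -
  have "\<exists>i. z i > y i"
  proof (rule ccontr)
    assume "\<not> (\<exists>i. z i > y i)"
    then have "\<forall>t. nat (z t - y t) = 0" by (auto simp: not_less)
    then have "pos z y = 0" by (simp add: pos_def)
    with assms show False by simp
  qed
  then show ?thesis using that by blast
qed

lemma pos_line: fixes y :: "'n::finite \<Rightarrow> int" assumes "i \<noteq> j"
  shows "pos (y + smul (int c) (chi i - chi j)) y = c"
proof -
  have "\<forall>t. nat ((y + smul (int c) (chi i - chi j)) t - y t) = (if t = i then c else 0)"
    using assms by (auto simp: chi_def smul_def)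
  then show ?thesis by (simp add: pos_def)
qed

lemma ereal_sum_fin: "A + B \<le> ereal s \<Longrightarrow> A \<noteq> -\<infinity> \<Longrightarrow> B \<noteq> -\<infinity> \<Longrightarrow> \<exists>a b. A = ereal a \<and> B = ereal b \<and> a + b \<le> s"
  by (cases A; cases B) auto

lemma eh1: "A - ereal r = ereal b \<Longrightarrow> A = ereal (r + b)" by (cases A) auto
lemma eh2: "A \<ge> ereal a \<Longrightarrow> A - ereal b \<ge> ereal (a - b)" by (cases A) auto
lemma eh3: "A - ereal b \<ge> ereal a \<Longrightarrow> A \<ge> ereal (b + a)" by (cases A) auto
lemma eh4: "A > ereal a \<Longrightarrow> A - ereal b > ereal (a - b)" by (cases A) auto

definition Inv where
 "Inv f \<alpha> y P \<longleftrightarrow> y \<in> dom_f f \<and> (\<forall>k l. fder f y k l \<ge> ereal \<alpha>) \<and>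
     (\<forall>(k,l)\<in>P. k \<noteq> l \<and> fder f y k l > ereal \<alpha>)"

context
  fixes f :: "('n::finite \<Rightarrow> int) \<Rightarrow> ereal"
  assumes noninf: "\<forall>z. f z \<noteq> -\<infinity>" and mc: "M_convex f"
begin

lemma dom_eq_y:
  assumes "y \<in> dom_f f" "z \<in> dom_f f" "\<forall>t. z t \<le> y t" shows "z = y"
proof (rule ccontr)
  assume "z \<noteq> y"
  then obtain i where "z i \<noteq> y i" by auto
  with assms(3) have "y i > z i" by (meson le_less)
  with mc assms(1,2) obtain j where "y j < z j" unfolding M_convex_def by blast
  with assms(3) show False by (meson not_le)
qed

lemma exch:
  assumes "y \<in> dom_f f" "z \<in> dom_f f" "z i > y i"
  obtains j where "z j < y j" "f z + f y \<ge> f (z - chi i + chi j) + f (y + chi i - chi j)"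
  using mc assms unfolding M_convex_def by blast

lemma lowerG:
  fixes \<alpha> :: real
  assumes y: "f y = ereal r" and low: "\<forall>k l. fder f y k l \<ge> ereal \<alpha>"
  shows "f z \<ge> ereal (r + real (pos z y) * \<alpha>)"
proof -
  have yd: "y \<in> dom_f f" using y by (simp add: dom_f_def)
  have "\<forall>z. pos z y = m \<longrightarrow> f z \<ge> ereal (r + real m * \<alpha>)" for m
  proof (induction m)
    case 0
    show ?case
    proof (intro allI impI)
      fix z assume pz: "pos z y = 0"
      show "f z \<ge> ereal (r + real 0 * \<alpha>)"
      proof (cases "f z = \<infinity>")
        case True then show ?thesis by simp
      next
        case False
        then have "z \<in> dom_f f" by (simp add: dom_f_def top.not_eq_extremum)
        moreover have "\<forall>t. z t \<le> y t" using pz pos_zero by blast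
        ultimately have "z = y" using dom_eq_y yd by blast
        then show ?thesis using y by simp
      qed
    qed
  next
    case (Suc m)
    show ?case
    proof (intro allI impI)
      fix z assume pz: "pos z y = Suc m"
      show "f z \<ge> ereal (r + real (Suc m) * \<alpha>)"
      proof (cases "f z = \<infinity>")
        case True then show ?thesis by simp
      next
        case False
        then obtain s where s: "f z = ereal s" using noninf by (cases "f z") auto
        have zd: "z \<in> dom_f f" using s by (simp add: dom_f_def)
        obtain i where zi: "z i > y i" using pos_pos[OF pz] by blast
        obtain j where j: "z j < y j" and ex: "f z + f y \<ge> f (z - chi i + chi j) + f (y + chi i - chi j)"
          using exch[OF yd zd zi] by blast
        have "pos (z - chi i + chi j) y = m" using pos_exchange[OF zi j] pz by simp
        with Suc.IH have a: "f (z - chi i + chi j) \<ge> ereal (r + real m * \<alpha>)" by blast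
        have b: "f (y + chi i - chi j) - f y \<ge> ereal \<alpha>" using low by (simp add: fder_def)
        obtain a' b' where ab: "f (z - chi i + chi j) = ereal a'" "f (y + chi i - chi j) = ereal b'"
          "a' + b' \<le> s + r"
          using ereal_sum_fin[of "f (z - chi i + chi j)" "f (y + chi i - chi j)" "s + r"] ex s y noninf
          by auto
        show ?thesis using a b ab s y by (simp add: algebra_simps)
      qed
    qed
  qed
  then show ?thesis by blast
qed

lemma lowerG_strict:
  fixes \<alpha> :: real
  assumes y: "f y = ereal r" and low: "\<forall>k l. fder f y k l \<ge> ereal \<alpha>"
    and k: "z k > y k" and strict: "\<forall>l. l \<noteq> k \<longrightarrow> fder f y k l > ereal \<alpha>"
  shows "f z > ereal (r + real (pos z y) * \<alpha>)"
proof (cases "f z = \<infinity>")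
  case True then show ?thesis by simp
next
  case False
  have yd: "y \<in> dom_f f" using y by (simp add: dom_f_def)
  then obtain s where s: "f z = ereal s" using noninf False by (cases "f z") auto
  have zd: "z \<in> dom_f f" using s by (simp add: dom_f_def)
  obtain j where j: "z j < y j" and ex: "f z + f y \<ge> f (z - chi k + chi j) + f (y + chi k - chi j)"
    using exch[OF yd zd k] by blast
  have jk: "j \<noteq> k" using j k by auto
  have pz: "pos z y = Suc (pos (z - chi k + chi j) y)" using pos_exchange[OF k j] .
  have a: "f (z - chi k + chi j) \<ge> ereal (r + real (pos (z - chi k + chi j) y) * \<alpha>)"
    by (rule lowerG[OF y low])
  have b: "f (y + chi k - chi j) - f y > ereal \<alpha>" using strict jk by (simp add: fder_def)
  obtain a' b' where ab: "f (z - chi k + chi j) = ereal a'" "f (y + chi k - chi j) = ereal b'"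
    "a' + b' \<le> s + r"
    using ereal_sum_fin[of "f (z - chi k + chi j)" "f (y + chi k - chi j)" "s + r"] ex s y noninf
    by auto
  show ?thesis using a b ab s y pz by (simp add: algebra_simps)
qed


lemma smul0: "y + smul 0 v = y" by (rule ext) (simp add: smul_def)

lemma lowerF:
  fixes \<alpha> :: real
  assumes y: "f y = ereal r" and low: "\<forall>k l. fder f y k l \<ge> ereal \<alpha>"
    and ij: "i \<noteq> j" and li: "l \<noteq> i" and lj: "l \<noteq> j" and sl: "fder f y i l > ereal \<alpha>"
  shows "f (y + smul (int c) (chi i - chi j) + chi i - chi l) > ereal (r + (real c + 1) * \<alpha>)"
proof (induction c)
  case 0
  have "f (y + chi i - chi l) - ereal r > ereal \<alpha>" using sl y by (simp add: fder_def)
  then have "f (y + chi i - chi l) > ereal (r + \<alpha>)" by (cases "f (y + chi i - chi l)") auto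
  moreover have e: "y + smul (int 0) (chi i - chi j) = y" by (rule ext) (simp add: smul_def)
  moreover have "ereal (r + (real 0 + 1) * \<alpha>) = ereal (r + \<alpha>)" by simp
  ultimately show ?case by (simp only: e)
next
  case (Suc c)
  define z where "z = y + smul (int (Suc c)) (chi i - chi j) + chi i - chi l"
  have yd: "y \<in> dom_f f" using y by (simp add: dom_f_def)
  have "f z > ereal (r + (real (Suc c) + 1) * \<alpha>)"
  proof (cases "f z = \<infinity>")
    case True then show ?thesis by simp
  next
    case False
    then obtain s where s: "f z = ereal s" using noninf by (cases "f z") auto
    have zd: "z \<in> dom_f f" using s by (simp add: dom_f_def)
    have zi: "z i > y i" using ij li by (simp add: z_def smul_def chi_def)
    obtain j' where j': "z j' < y j'" and ex: "f z + f y \<ge> f (z - chi i + chi j') + f (y + chi i - chi j')"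
      using exch[OF yd zd zi] by blast
    have jj: "j' = j \<or> j' = l" using j' ij li lj by (auto simp: z_def smul_def chi_def split: if_splits)
    obtain a' b' where ab: "f (z - chi i + chi j') = ereal a'" "f (y + chi i - chi j') = ereal b'"
      "a' + b' \<le> s + r"
      using ereal_sum_fin[of "f (z - chi i + chi j')" "f (y + chi i - chi j')" "s + r"] ex s y noninf
      by auto
    from jj show ?thesis
    proof
      assume jl: "j' = l"
      have zz: "z - chi i + chi j' = y + smul (int (Suc c)) (chi i - chi j)"
        using jl by (auto simp: z_def)
      have a: "f (z - chi i + chi j') \<ge> ereal (r + real (Suc c) * \<alpha>)"
        using lowerG[OF y low, of "z - chi i + chi j'"] zz pos_line[OF ij, where y=y and c="Suc c"] by simp
      have b: "f (y + chi i - chi j') - f y > ereal \<alpha>" using sl jl by (simp add: fder_def)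
      show ?thesis using a b ab s y by (simp add: algebra_simps)
    next
      assume jj: "j' = j"
      have zz: "z - chi i + chi j' = y + smul (int c) (chi i - chi j) + chi i - chi l"
        using jj by (auto simp: z_def smul_def chi_def algebra_simps)
      have a: "f (z - chi i + chi j') > ereal (r + (real c + 1) * \<alpha>)"
        unfolding zz by (rule Suc.IH)
      have b: "f (y + chi i - chi j') - f y \<ge> ereal \<alpha>" using low by (simp add: fder_def)
      show ?thesis using a b ab s y by (simp add: algebra_simps)
    qed
  qed
  then show ?case by (simp only: z_def)
qed


lemma step_pres:
  fixes \<alpha> :: real
  assumes bd: "bounded_dom f" and phx: "phi f x = ereal \<alpha>" and neg: "\<alpha> < 0"
    and inv: "Inv f \<alpha> y P" and ij: "i \<noteq> j"
    and cond: "\<forall>(k,l)\<in>P. (k = i \<longrightarrow> l \<noteq> j) \<and> (k \<noteq> i \<longrightarrow> (\<forall>l'. l' \<noteq> k \<longrightarrow> (k,l') \<in> P))"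
  shows "Inv f \<alpha> (incslope_step f x y (i,j)) (insert (i,j) P)"
proof -
  have yd: "y \<in> dom_f f" and low: "\<forall>k l. fder f y k l \<ge> ereal \<alpha>"
    and sP: "\<forall>(k,l)\<in>P. k \<noteq> l \<and> fder f y k l > ereal \<alpha>"
    using inv by (auto simp: Inv_def)
  obtain r where y: "f y = ereal r" using yd noninf
    by (cases "f y") (auto simp: dom_f_def)
  show ?thesis
  proof (cases "fder f y i j = ereal \<alpha>")
    case False
    have st: "incslope_step f x y (i,j) = y" using False phx by (simp add: incslope_step_def)
    have "fder f y i j > ereal \<alpha>" using False low by (simp add: order.not_eq_order_implies_strict)
    then show ?thesis using inv ij unfolding st by (auto simp: Inv_def)
  next
    case True
    define v where "v = chi i - chi j"
    define S where "S = {l::nat. f (y + smul (int l) v) - f y = ereal (real l) * fder f y i j}"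
    define c where "c = cbar f y i j"
    have cS: "c = Max S" unfolding c_def S_def cbar_def v_def ..
    obtain B where B: "\<forall>w\<in>dom_f f. \<forall>k. \<bar>w k\<bar> \<le> B" using bd by (auto simp: bounded_dom_def)
    have "S \<subseteq> {..nat (B - y i)}"
    proof
      fix l assume "l \<in> S"
      then have e: "f (y + smul (int l) v) - ereal r = ereal (real l * \<alpha>)"
        using True y by (simp add: S_def)
      then have "f (y + smul (int l) v) = ereal (r + real l * \<alpha>)" by (rule eh1)
      then have "y + smul (int l) v \<in> dom_f f" by (simp add: dom_f_def)
      then have "\<bar>(y + smul (int l) v) i\<bar> \<le> B" using B by blast
      moreover have "(y + smul (int l) v) i = y i + int l" using ij by (simp add: v_def smul_def chi_def)
      ultimately show "l \<in> {..nat (B - y i)}" by auto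
    qed
    then have finS: "finite S" using finite_subset by blast
    have "0 \<in> S" using y by (simp add: S_def smul0[simplified])
    then have cin: "c \<in> S" using Max_in[OF finS] cS by auto
    have cnot: "Suc c \<notin> S"
    proof
      assume "Suc c \<in> S"
      then have "Suc c \<le> Max S" by (rule Max_ge[OF finS])
      with cS show False by simp
    qed
    define y' where "y' = y + smul (int c) v"
    have "f y' - ereal r = ereal (real c * \<alpha>)"
      using cin True y by (simp add: S_def y'_def)
    then have y': "f y' = ereal (r + real c * \<alpha>)" by (rule eh1)
    have y'd: "y' \<in> dom_f f" using y' by (simp add: dom_f_def)
    have st: "incslope_step f x y (i,j) = y'"
      using True phx by (simp add: incslope_step_def y'_def c_def v_def)
    have diff: "(y' + chi k - chi l) t - y t = int c * (chi i t - chi j t) + chi k t - chi l t" for k l t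
      by (simp add: y'_def smul_def v_def algebra_simps)
    have posb: "pos (y' + chi k - chi l) y \<le> c + 1" for k l
    proof -
      have "pos (y' + chi k - chi l) y \<le> sum (\<lambda>t. (if t = i then c else 0) + (if t = k then 1 else 0)) UNIV"
      proof (rule pos_bound)
        fix t show "nat ((y' + chi k - chi l) t - y t) \<le> (if t = i then c else 0) + (if t = k then 1 else 0)"
          unfolding diff by (auto simp: chi_def)
      qed
      also have "\<dots> = c + 1" by (simp add: sum.distrib)
      finally show ?thesis .
    qed
    have rm: "real m * \<alpha> \<ge> real n * \<alpha>" if "m \<le> n" for m n
      using that neg by (simp add: mult_right_mono_neg)
    have low': "fder f y' k l \<ge> ereal \<alpha>" for k l
    proof -
      have "ereal (r + real (c + 1) * \<alpha>) \<le> ereal (r + real (pos (y' + chi k - chi l) y) * \<alpha>)"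
        using rm[OF posb[of k l]] by simp
      also have "\<dots> \<le> f (y' + chi k - chi l)"
        by (rule lowerG[OF y low])
      finally have "f (y' + chi k - chi l) - ereal (r + real c * \<alpha>) \<ge> ereal ((r + real (c + 1) * \<alpha>) - (r + real c * \<alpha>))"
        by (rule eh2)
      then show ?thesis using y' by (simp add: fder_def algebra_simps)
    qed
    have new: "fder f y' i j > ereal \<alpha>"
    proof -
      have eqz: "y' + chi i - chi j = y + smul (int (Suc c)) v"
        by (rule ext) (simp add: y'_def smul_def v_def algebra_simps)
      have ne: "f (y' + chi i - chi j) - ereal r \<noteq> ereal (real (Suc c) * \<alpha>)"
        using cnot True y unfolding S_def eqz by simp
      have "f (y' + chi i - chi j) - ereal (r + real c * \<alpha>) \<ge> ereal \<alpha>"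
        using low' y' by (simp add: fder_def)
      then have ge: "f (y' + chi i - chi j) \<ge> ereal (r + real c * \<alpha> + \<alpha>)" by (rule eh3)
      have "f (y' + chi i - chi j) \<noteq> ereal (r + real c * \<alpha> + \<alpha>)"
        using ne by (auto simp: algebra_simps)
      with ge have "f (y' + chi i - chi j) > ereal (r + real c * \<alpha> + \<alpha>)" by simp
      then have "f (y' + chi i - chi j) - ereal (r + real c * \<alpha>) > ereal ((r + real c * \<alpha> + \<alpha>) - (r + real c * \<alpha>))"
        by (rule eh4)
      then show ?thesis using y' by (simp add: fder_def)
    qed
    have old: "fder f y' k l > ereal \<alpha>" if kl: "(k,l) \<in> P" for k l
    proof -
      have lk: "l \<noteq> k" using sP kl by auto
      show ?thesis
      proof (cases "k = i")
        case True
        have lj: "l \<noteq> j" using cond kl True by auto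
        have sl: "fder f y i l > ereal \<alpha>" using sP kl True by auto
        have "f (y + smul (int c) (chi i - chi j) + chi i - chi l) > ereal (r + (real c + 1) * \<alpha>)"
          by (rule lowerF[OF y low ij _ lj sl]) (use lk True in auto)
        then have "f (y' + chi i - chi l) > ereal (r + (real c + 1) * \<alpha>)" by (simp only: y'_def v_def)
        then have "f (y' + chi i - chi l) - ereal (r + real c * \<alpha>) > ereal ((r + (real c + 1) * \<alpha>) - (r + real c * \<alpha>))"
          by (rule eh4)
        then show ?thesis using y' True by (simp add: fder_def algebra_simps)
      next
        case False
        have all: "\<forall>l'. l' \<noteq> k \<longrightarrow> (k,l') \<in> P" using cond kl False by blast
        have strict: "\<forall>l'. l' \<noteq> k \<longrightarrow> fder f y k l' > ereal \<alpha>"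
        proof (intro allI impI)
          fix l' assume "l' \<noteq> k"
          with all have "(k,l') \<in> P" by blast
          with sP show "fder f y k l' > ereal \<alpha>" by blast
        qed
        show ?thesis
        proof (cases "(y' + chi k - chi l) k > y k")
          case True
          have "ereal (r + real (c + 1) * \<alpha>) \<le> ereal (r + real (pos (y' + chi k - chi l) y) * \<alpha>)"
            using rm[OF posb[of k l]] by simp
          also have "\<dots> < f (y' + chi k - chi l)"
            by (rule lowerG_strict[where z="y' + chi k - chi l", OF y low True strict])
          finally have "f (y' + chi k - chi l) - ereal (r + real c * \<alpha>) > ereal ((r + real (c + 1) * \<alpha>) - (r + real c * \<alpha>))"
            by (rule eh4)
          then show ?thesis using y' by (simp add: fder_def algebra_simps)
        next
          case False
          have pb: "pos (y' + chi k - chi l) y \<le> c"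
          proof -
            have "pos (y' + chi k - chi l) y \<le> sum (\<lambda>t. (if t = i then c else 0)) UNIV"
            proof (rule pos_bound)
              fix t show "nat ((y' + chi k - chi l) t - y t) \<le> (if t = i then c else 0)"
              proof (cases "t = k")
                case True then show ?thesis using False by simp
              next
                case False then show ?thesis unfolding diff by (auto simp: chi_def)
              qed
            qed
            also have "\<dots> = c" by simp
            finally show ?thesis .
          qed
          have "ereal (r + real c * \<alpha>) \<le> ereal (r + real (pos (y' + chi k - chi l) y) * \<alpha>)"
            using rm[OF pb] by simp
          also have "\<dots> \<le> f (y' + chi k - chi l)"
            by (rule lowerG[OF y low])
          finally have "f (y' + chi k - chi l) - ereal (r + real c * \<alpha>) \<ge> ereal ((r + real c * \<alpha>) - (r + real c * \<alpha>))"
            by (rule eh2)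
          then have f0: "fder f y' k l \<ge> 0" using y' by (simp add: fder_def zero_ereal_def)
          have "ereal \<alpha> < 0" using neg by (simp add: zero_ereal_def)
          then show ?thesis using f0 by (rule less_le_trans)
        qed
      qed
    qed
    have "\<forall>(k,l)\<in>insert (i,j) P. k \<noteq> l \<and> fder f y' k l > ereal \<alpha>"
    proof
      fix p assume "p \<in> insert (i,j) P"
      then show "case p of (k,l) \<Rightarrow> k \<noteq> l \<and> fder f y' k l > ereal \<alpha>"
      proof
        assume "p = (i,j)" then show ?thesis using new ij by simp
      next
        assume pP: "p \<in> P"
        obtain k l where p: "p = (k,l)" by (cases p)
        show ?thesis using pP sP old unfolding p by blast
      qed
    qed
    then show ?thesis unfolding st Inv_def
      using y'd low' by blast
  qed
qed


lemma inner:
  fixes \<alpha> :: real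
  assumes bd: "bounded_dom f" and phx: "phi f x = ereal \<alpha>" and neg: "\<alpha> < 0"
  shows "distinct js \<Longrightarrow> i \<notin> set js \<Longrightarrow> Inv f \<alpha> y P \<Longrightarrow>
    (\<forall>(k,l)\<in>P. (k = i \<longrightarrow> l \<notin> set js) \<and> (k \<noteq> i \<longrightarrow> (\<forall>l'. l' \<noteq> k \<longrightarrow> (k,l') \<in> P))) \<Longrightarrow>
    Inv f \<alpha> (foldl (incslope_step f x) y (map (\<lambda>j. (i,j)) js)) (P \<union> {i} \<times> set js)"
proof (induction js arbitrary: y P)
  case Nil then show ?case by simp
next
  case (Cons j js)
  have ij: "i \<noteq> j" using Cons.prems by auto
  have c: "\<forall>(k,l)\<in>P. (k = i \<longrightarrow> l \<noteq> j) \<and> (k \<noteq> i \<longrightarrow> (\<forall>l'. l' \<noteq> k \<longrightarrow> (k,l') \<in> P))"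
    using Cons.prems(4) by auto
  have I1: "Inv f \<alpha> (incslope_step f x y (i,j)) (insert (i,j) P)"
    by (rule step_pres[OF bd phx neg Cons.prems(3) ij c])
  have c2: "\<forall>(k,l)\<in>insert (i,j) P. (k = i \<longrightarrow> l \<notin> set js) \<and> (k \<noteq> i \<longrightarrow> (\<forall>l'. l' \<noteq> k \<longrightarrow> (k,l') \<in> insert (i,j) P))"
  proof
    fix p assume pin: "p \<in> insert (i,j) P"
    obtain k l where p: "p = (k,l)" by (cases p)
    show "case p of (k,l) \<Rightarrow> (k = i \<longrightarrow> l \<notin> set js) \<and> (k \<noteq> i \<longrightarrow> (\<forall>l'. l' \<noteq> k \<longrightarrow> (k,l') \<in> insert (i,j) P))"
    proof (cases "p = (i,j)")
      case True then show ?thesis using Cons.prems(1) by auto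
    next
      case False
      then have "(k,l) \<in> P" using pin p by auto
      then show ?thesis using Cons.prems(4) unfolding p by auto
    qed
  qed
  have d: "distinct js" "i \<notin> set js" using Cons.prems(1,2) by auto
  have "Inv f \<alpha> (foldl (incslope_step f x) (incslope_step f x y (i,j)) (map (\<lambda>j. (i,j)) js)) (insert (i,j) P \<union> {i} \<times> set js)"
    by (rule Cons.IH[OF d I1 c2])
  moreover have "insert (i,j) P \<union> {i} \<times> set js = P \<union> {i} \<times> set (j # js)" by auto
  ultimately show ?case by simp
qed

lemma outer:
  fixes \<alpha> :: real
  assumes bd: "bounded_dom f" and phx: "phi f x = ereal \<alpha>" and neg: "\<alpha> < 0"
    and oj: "\<forall>i. distinct (ord_j i) \<and> set (ord_j i) = UNIV - {i}"
  shows "distinct is \<Longrightarrow> set is \<inter> D = {} \<Longrightarrow> Inv f \<alpha> y {(k,l). k \<in> D \<and> l \<noteq> k} \<Longrightarrow>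
   Inv f \<alpha> (foldl (incslope_step f x) y (concat (map (\<lambda>i. map (\<lambda>j. (i, j)) (ord_j i)) is)))
     {(k,l). k \<in> D \<union> set is \<and> l \<noteq> k}"
proof (induction "is" arbitrary: y D)
  case Nil then show ?case by simp
next
  case (Cons i "is")
  have iD: "i \<notin> D" using Cons.prems by auto
  have "Inv f \<alpha> (foldl (incslope_step f x) y (map (\<lambda>j. (i,j)) (ord_j i)))
      ({(k,l). k \<in> D \<and> l \<noteq> k} \<union> {i} \<times> set (ord_j i))"
  proof (rule inner[OF bd phx neg])
    show "distinct (ord_j i)" "i \<notin> set (ord_j i)" using oj by auto
    show "Inv f \<alpha> y {(k,l). k \<in> D \<and> l \<noteq> k}" by (rule Cons.prems(3))
    show "\<forall>(k,l)\<in>{(k,l). k \<in> D \<and> l \<noteq> k}. (k = i \<longrightarrow> l \<notin> set (ord_j i)) \<and> (k \<noteq> i \<longrightarrow> (\<forall>l'. l' \<noteq> k \<longrightarrow> (k,l') \<in> {(k,l). k \<in> D \<and> l \<noteq> k}))"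
      using iD by auto
  qed
  moreover have "{(k,l). k \<in> D \<and> l \<noteq> k} \<union> {i} \<times> set (ord_j i) = {(k,l). k \<in> insert i D \<and> l \<noteq> k}"
    using oj by auto
  ultimately have I1: "Inv f \<alpha> (foldl (incslope_step f x) y (map (\<lambda>j. (i,j)) (ord_j i))) {(k,l). k \<in> insert i D \<and> l \<noteq> k}"
    by simp
  have "Inv f \<alpha> (foldl (incslope_step f x) (foldl (incslope_step f x) y (map (\<lambda>j. (i,j)) (ord_j i)))
      (concat (map (\<lambda>i. map (\<lambda>j. (i, j)) (ord_j i)) is))) {(k,l). k \<in> insert i D \<union> set is \<and> l \<noteq> k}"
  proof (rule Cons.IH)
    show "distinct is" using Cons.prems(1) by simp
    show "set is \<inter> insert i D = {}" using Cons.prems(1,2) by auto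
    show "Inv f \<alpha> (foldl (incslope_step f x) y (map (\<lambda>j. (i,j)) (ord_j i))) {(k,l). k \<in> insert i D \<and> l \<noteq> k}"
      by (rule I1)
  qed
  moreover have "insert i D \<union> set is = D \<union> set (i # is)" by auto
  ultimately show ?case by simp
qed

end

lemma phi_set: "{fder f y i j | i j. True} = (\<lambda>p. fder f y (fst p) (snd p)) ` (UNIV :: ('n::finite \<times> 'n) set)"
proof (intro set_eqI iffI)
  fix a assume "a \<in> {fder f y i j | i j. True}"
  then obtain i j where "a = fder f y i j" by blast
  then show "a \<in> (\<lambda>p. fder f y (fst p) (snd p)) ` (UNIV :: ('n \<times> 'n) set)"
    by (intro image_eqI[where x="(i,j)"]) auto
next
  fix a assume "a \<in> (\<lambda>p. fder f y (fst p) (snd p)) ` (UNIV :: ('n \<times> 'n) set)"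
  then obtain p where "a = fder f y (fst p) (snd p)" by blast
  then show "a \<in> {fder f y i j | i j. True}" by blast
qed

theorem mainTheorem4:
  fixes f :: "('n::finite \<Rightarrow> int) \<Rightarrow> ereal"
    and x :: "'n \<Rightarrow> int"
    and ord_i :: "'n list" and ord_j :: "'n \<Rightarrow> 'n list"
  assumes "\<forall>z. f z \<noteq> -\<infinity>"
    and "M_convex f"
    and "bounded_dom f"
    and "x \<in> dom_f f"
    and "phi f x < 0"
    and "distinct ord_i" and "set ord_i = UNIV"
    and "\<forall>i. distinct (ord_j i) \<and> set (ord_j i) = UNIV - {i}"
  shows "phi f (M_IncSlope f x ord_i ord_j) > phi f x"
proof -
  note ni = assms(1) and mc = assms(2) and bd = assms(3) and xd = assms(4)
  have "f x \<noteq> -\<infinity>" using ni by blast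
  moreover have "f x \<noteq> \<infinity>" using xd by (simp add: dom_f_def)
  ultimately obtain r where xr: "f x = ereal r" by (cases "f x") auto
  have fin: "finite {fder f y i j | i j. True}" for y :: "'n \<Rightarrow> int"
    unfolding phi_set by simp
  have ne: "{fder f y i j | i j. True} \<noteq> {}" for y :: "'n \<Rightarrow> int" by auto
  have "phi f x \<in> {fder f x i j | i j. True}" unfolding phi_def using fin ne by (rule Min_in)
  then obtain i0 j0 where p0: "phi f x = fder f x i0 j0" by auto
  have "f (x + chi i0 - chi j0) \<noteq> -\<infinity>" using ni by blast
  then have "phi f x \<noteq> -\<infinity>" unfolding p0 fder_def xr
    by (cases "f (x + chi i0 - chi j0)") auto
  then obtain \<alpha> where phx: "phi f x = ereal \<alpha>" using assms(5) by (cases "phi f x") auto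
  have neg: "\<alpha> < 0" using assms(5) phx by (simp add: zero_ereal_def)
  have I0: "Inv f \<alpha> x {(k,l). k \<in> {} \<and> l \<noteq> k}"
    unfolding Inv_def
  proof (intro conjI allI)
    show "x \<in> dom_f f" by (rule xd)
    fix k l show "ereal \<alpha> \<le> fder f x k l" unfolding phx[symmetric] phi_def
      by (rule Min_le[OF fin]) blast
  qed blast
  have "Inv f \<alpha> (M_IncSlope f x ord_i ord_j) {(k,l). k \<in> {} \<union> set ord_i \<and> l \<noteq> k}"
    unfolding M_IncSlope_def
    by (rule outer[OF ni mc bd phx neg assms(8) assms(6) _ I0]) simp
  then have I: "Inv f \<alpha> (M_IncSlope f x ord_i ord_j) {(k,l). l \<noteq> k}" using assms(7) by simp
  define y where "y = M_IncSlope f x ord_i ord_j"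
  have I': "Inv f \<alpha> y {(k,l). l \<noteq> k}" using I by (simp only: y_def)
  have yd: "y \<in> dom_f f" using I' unfolding Inv_def by blast
  have strictA: "\<forall>(k,l)\<in>{(k,l). l \<noteq> k}. k \<noteq> l \<and> fder f y k l > ereal \<alpha>"
    using I' unfolding Inv_def by blast
  have "f y \<noteq> -\<infinity>" using ni by blast
  moreover have "f y \<noteq> \<infinity>" using yd by (simp add: dom_f_def)
  ultimately obtain s where ys: "f y = ereal s" by (cases "f y") auto
  have "ereal \<alpha> < phi f y" unfolding phi_def
  proof (subst Min_gr_iff[OF fin ne], intro ballI)
    fix a assume "a \<in> {fder f y i j | i j. True}"
    then obtain i j where a: "a = fder f y i j" by auto
    show "ereal \<alpha> < a"
    proof (cases "i = j")
      case True
      then have "a = 0" using ys by (simp add: a fder_def zero_ereal_def)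
      then show ?thesis using neg by (simp add: zero_ereal_def)
    next
      case False
      then show ?thesis using strictA unfolding a by blast
    qed
  qed
  then show ?thesis using phx by (simp add: y_def)
qed

end
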